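(* Fix an integer $d\ge 0$ and for $m\ge 0$ let $$a_m=\sum_{j=0}^{\lfloor (m+2)/2\rfloor} S(j,d,m+2-2j).$$ Then $a_0=d$, $a_1=d+1$, and $a_m=a_{m-1}+a_{m-2}$ for all $m\ge 2$ (so the sequence is $d,\ d+1,\ 2d+1,\ 3d+2,\ 5d+3,\ 8d+5,\dots$).
   Context: Binomial convention: for integers $M,m$, $\binom{M}{m}=\frac{M!}{m!(M-m)!}$ if $0\le m\le M$, and $\binom{M}{m}=0$ otherwise (in particular whenever $M<0$ or $m<0$ or $m>M$). For nonnegative integers $v,d,n$ the hypersolid number is defined by $$S(v,d,n)=\binom{v+n-2}{v-1}+d\binom{v+n-2}{v}.$$ *)

theory Defs
  imports Main
begin

definition binom :: "int \<Rightarrow> int \<Rightarrow> nat" where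
  "binom M m = (if 0 \<le> m \<and> m \<le> M then nat M choose nat m else 0)"

definition hypersolid :: "nat \<Rightarrow> nat \<Rightarrow> nat \<Rightarrow> nat" where
  "hypersolid v d n =
     binom (int v + int n - 2) (int v - 1) + d * binom (int v + int n - 2) (int v)"

end

theory Submission
  imports Defs
begin

lemma pascal:
  assumes "M \<ge> 1" shows "binom M k = binom (M-1) k + binom (M-1) (k-1)"
proof -
  define p where "p = nat (M-1)"
  have p: "nat M = Suc p" "p = nat (M-1)" using assms unfolding p_def by arith+
  show ?thesis
  proof (cases "k \<le> 0")
    case True
    then show ?thesis using assms by (cases "k = 0") (auto simp: binom_def)
  next
    case False
    define q where "q = nat (k-1)"
    have q: "nat k = Suc q" "q = nat (k-1)" using False unfolding q_def by arith+
    have k1: "k - 1 \<ge> 0" using False by simp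
    show ?thesis
    proof (cases "k \<le> M")
      case True
      then have "binom M k = Suc p choose Suc q" using False p q by (simp add: binom_def)
      moreover have "binom (M-1) (k-1) = p choose q" using True k1 p q by (simp add: binom_def)
      moreover have "binom (M-1) k = p choose Suc q"
      proof (cases "k \<le> M - 1")
        case True thus ?thesis using False p q by (simp add: binom_def)
      next
        case c: False
        then have "k = M" using True by simp
        then have "Suc q > p" using p q by simp
        then show ?thesis using c by (simp add: binom_def)
      qed
      ultimately show ?thesis by simp
    next
      case c: False
      then show ?thesis by (simp add: binom_def)
    qed
  qed
qed

definition G :: "nat \<Rightarrow> nat \<Rightarrow> nat" where
  "G m N = (\<Sum>j = 0..N. binom (int m - int j) (int j))"
definition H :: "nat \<Rightarrow> nat \<Rightarrow> nat" where
  "H m N = (\<Sum>j = 0..N. binom (int m - int j) (int j - 1))"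

lemma G_stable: "N \<ge> m div 2 \<Longrightarrow> G m N = G m (m div 2)"
proof (induction N rule: dec_induct)
  case (step n)
  then have "binom (int m - int (Suc n)) (int (Suc n)) = 0" by (auto simp: binom_def)
  then show ?case using step by (simp add: G_def)
qed simp

lemma H_stable: "N \<ge> (m+1) div 2 \<Longrightarrow> H m N = H m ((m+1) div 2)"
proof (induction N rule: dec_induct)
  case (step n)
  then have "binom (int m - int (Suc n)) (int (Suc n) - 1) = 0" by (auto simp: binom_def)
  then show ?case using step by (simp add: H_def)
qed simp

lemma H_shift: "H (Suc m) (Suc N) = G m N"
proof -
  have "H (Suc m) (Suc N) = binom (int (Suc m)) (-1) + (\<Sum>j = 0..N. binom (int (Suc m) - int (Suc j)) (int (Suc j) - 1))"
    unfolding H_def by (subst sum.atLeast0_atMost_Suc_shift) simp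
  also have "\<dots> = G m N" by (simp add: G_def binom_def)
  finally show ?thesis .
qed

lemma G_rec: "G (m+2) (m+1) = G (m+1) (m+1) + G m m"
proof -
  have "G (m+2) (m+1) = (\<Sum>j = 0..m+1. binom (int (m+1) - int j) (int j) + binom (int (m+1) - int j) (int j - 1))"
    unfolding G_def by (intro sum.cong refl, subst pascal) (auto simp: algebra_simps)
  also have "\<dots> = G (m+1) (m+1) + H (m+1) (m+1)"
    by (simp add: G_def H_def sum.distrib)
  also have "H (m+1) (m+1) = G m m" using H_shift by simp
  finally show ?thesis .
qed

lemma H0: "H 0 N = 0"
  unfolding H_def by (rule sum.neutral) (auto simp: binom_def)

lemma a_eq:
  assumes a_def: "\<And>m. a m = (\<Sum>j = 0..(m + 2) div 2. hypersolid j d (m + 2 - 2 * j))"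
  shows "a m = H m m + d * G m m"
proof -
  have "a m = (\<Sum>j = 0..(m + 2) div 2. binom (int m - int j) (int j - 1) + d * binom (int m - int j) (int j))"
    unfolding a_def hypersolid_def by (intro sum.cong refl) (auto simp: of_nat_diff)
  also have "\<dots> = H m ((m+2) div 2) + d * G m ((m+2) div 2)"
    by (simp only: H_def G_def sum.distrib sum_distrib_left)
  also have "H m ((m+2) div 2) = H m m"
    using H_stable[of m "(m+2) div 2"] H_stable[of m m] by (cases m) auto
  also have "G m ((m+2) div 2) = G m m"
    using G_stable[of m "(m+2) div 2"] G_stable[of m m] by auto
  finally show ?thesis .
qed

lemma G_rec2: "G (k+2) (k+2) = G (k+1) (k+1) + G k k"
proof -
  have "G (k+2) (k+2) = G (k+2) (k+1)"
    using G_stable[of "k+2" "k+2"] G_stable[of "k+2" "k+1"] by simp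
  also have "\<dots> = G (k+1) (k+1) + G k k" by (rule G_rec)
  finally show ?thesis .
qed

lemma H_G: "H (Suc m) (Suc m) = G m m"
  by (rule H_shift)

lemma G00: "G 0 0 = 1" by (simp add: G_def binom_def)
lemma G11: "G 1 1 = 1" by (simp add: G_def binom_def)

theorem corollary5:
  fixes d :: nat and a :: "nat \<Rightarrow> nat"
  assumes a_def: "\<And>m. a m = (\<Sum>j = 0..(m + 2) div 2. hypersolid j d (m + 2 - 2 * j))"
  shows "a 0 = d \<and> a 1 = d + 1 \<and> (\<forall>m\<ge>2. a m = a (m - 1) + a (m - 2))"
proof (intro conjI allI impI)
  note A = a_eq[OF a_def]
  show "a 0 = d" using A[of 0] H0 G00 by simp
  show "a 1 = d + 1" using A[of 1] H_G[of 0] G00 G11 by simp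
  fix m :: nat assume "m \<ge> 2"
  define k where "k = m - 2"
  have k: "m = k + 2" using \<open>m \<ge> 2\<close> unfolding k_def by simp
  have Gm: "G m m = G (m-1) (m-1) + G (m-2) (m-2)" using G_rec2[of k] k by simp
  have Hm: "H m m = H (m-1) (m-1) + H (m-2) (m-2)"
  proof (cases k)
    case 0 thus ?thesis using k H_G[of 1] H_G[of 0] H0 G00 G11 by simp
  next
    case (Suc i)
    have "H m m = G (i+2) (i+2)" using H_G[of "i+2"] k Suc by simp
    also have "\<dots> = G (i+1) (i+1) + G i i" by (rule G_rec2)
    also have "\<dots> = H (m-1) (m-1) + H (m-2) (m-2)"
      using H_G[of "i+1"] H_G[of i] k Suc by simp
    finally show ?thesis .
  qed
  show "a m = a (m - 1) + a (m - 2)"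
  proof -
    have e: "a m = (H (m-1) (m-1) + H (m-2) (m-2)) + d * (G (m-1) (m-1) + G (m-2) (m-2))"
      using A[of m] Gm Hm by simp
    have e1: "a (m-1) = H (m-1) (m-1) + d * G (m-1) (m-1)" by (rule A)
    have e2: "a (m-2) = H (m-2) (m-2) + d * G (m-2) (m-2)" by (rule A)
    show ?thesis unfolding e e1 e2 distrib_left by linarith
  qed
qed

end
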